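(* Let $n\ge 1$, $d=2^n$, and let $\Lambda$ be a CPTP Pauli channel on $n$ qubits, with Pauli fidelities $f_a$ (indexed by the $d^2$ Pauli operators $a$), so that $\Lambda$ as a superoperator is diagonal in the Pauli basis with eigenvalues $f_a$. Let $F_p=\operatorname{Tr}(\Lambda)/d^2=\frac{1}{d^2}\sum_a f_a$ be its process fidelity, assume $\tfrac12<F_p<1$, and let $\gamma=\det(\Lambda)^{-2/d^2}$. Then $$F_p-1+2\lambda_0(1-F_p)+(2F_p-1)^{\lambda_0}\;\le\;\gamma^{-1/2}\;\le\;F_p,$$ where $$\lambda_0=\frac{\log(2-2F_p)-\log\bigl(-\log(2F_p-1)\bigr)}{\log(2F_p-1)}.$$ *)

theory Defs
  imports Complex_Main
begin

text \<open>n-qubit Pauli operators (up to phase) are indexed by pairs (x, z) of subsets of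
  the qubit set {0..<n}: the X-support and the Z-support. There are 4^n = d^2 of them.\<close>
definition paulis :: "nat \<Rightarrow> (nat set \<times> nat set) set" where
  "paulis n = Pow {..<n} \<times> Pow {..<n}"

text \<open>Commutation sign: P_b P_a P_b = pauli_sign a b * P_a (symplectic form).\<close>
definition pauli_sign :: "nat set \<times> nat set \<Rightarrow> nat set \<times> nat set \<Rightarrow> real" where
  "pauli_sign a b = (-1) ^ (card (fst a \<inter> snd b) + card (snd a \<inter> fst b))"

text \<open>A Pauli channel Lambda(rho) = sum_b p_b P_b rho P_b with error rates p.
  It is CPTP iff p is a probability distribution on the Paulis.\<close>
definition cptp_pauli_channel :: "nat \<Rightarrow> (nat set \<times> nat set \<Rightarrow> real) \<Rightarrow> bool" where
  "cptp_pauli_channel n p \<longleftrightarrow> (\<forall>b\<in>paulis n. 0 \<le> p b) \<and> (\<Sum>b\<in>paulis n. p b) = 1"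

text \<open>Pauli fidelities: Lambda(P_a) = f_a P_a, i.e. the eigenvalues of the superoperator.\<close>
definition pauli_fidelity :: "nat \<Rightarrow> (nat set \<times> nat set \<Rightarrow> real) \<Rightarrow> nat set \<times> nat set \<Rightarrow> real" where
  "pauli_fidelity n p a = (\<Sum>b\<in>paulis n. p b * pauli_sign a b)"

end

theory Submission
  imports Defs "HOL-Analysis.Analysis"
begin

lemma char_sum:
  "finite S \<Longrightarrow> T \<subseteq> S \<Longrightarrow>
   (\<Sum>x\<in>Pow S. (-1::real)^card(x\<inter>T)) = (if T = {} then 2^card S else 0)"
proof (induction S arbitrary: T rule: finite_induct)
  case empty
  then show ?case by simp
next
  case (insert t S)
  have disj: "Pow S \<inter> insert t ` Pow S = {}" using insert(2) by blast
  have inj: "inj_on (insert t) (Pow S)"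
  proof (rule inj_onI)
    fix x y assume "x \<in> Pow S" "y \<in> Pow S" "insert t x = insert t y"
    then show "x = y" using insert(2) by (metis Diff_insert_absorb PowD subsetD)
  qed
  have split: "(\<Sum>x\<in>Pow (insert t S). (-1::real)^card(x\<inter>T))
     = (\<Sum>x\<in>Pow S. (-1::real)^card(x\<inter>T)) + (\<Sum>x\<in>Pow S. (-1::real)^card(insert t x\<inter>T))"
  proof -
    have "(\<Sum>x\<in>Pow (insert t S). (-1::real)^card(x\<inter>T))
       = (\<Sum>x\<in>Pow S. (-1::real)^card(x\<inter>T)) + (\<Sum>x\<in>insert t ` Pow S. (-1::real)^card(x\<inter>T))"
      unfolding Pow_insert using insert(1) disj by (intro sum.union_disjoint) auto
    also have "(\<Sum>x\<in>insert t ` Pow S. (-1::real)^card(x\<inter>T)) = (\<Sum>x\<in>Pow S. (-1::real)^card(insert t x\<inter>T))"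
      using sum.reindex[OF inj] by simp
    finally show ?thesis .
  qed
  show ?case
  proof (cases "t \<in> T")
    case True
    have e1: "\<And>x. x \<in> Pow S \<Longrightarrow> x \<inter> T = x \<inter> (T - {t})" using insert(2) by blast
    have e2: "\<And>x. x \<in> Pow S \<Longrightarrow> (-1::real)^card (insert t x \<inter> T) = - ((-1)^card (x \<inter> (T - {t})))"
    proof -
      fix x assume x: "x \<in> Pow S"
      have "insert t x \<inter> T = insert t (x \<inter> (T - {t}))" using True by blast
      moreover have "finite (x \<inter> (T - {t}))" using x insert(1) by (meson PowD finite_Int finite_subset)
      moreover have "t \<notin> x \<inter> (T - {t})" by blast
      ultimately have "card (insert t x \<inter> T) = Suc (card (x \<inter> (T - {t})))" by simp
      then show "(-1::real)^card (insert t x \<inter> T) = - ((-1)^card (x \<inter> (T - {t})))" by simp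
    qed
    have s1: "(\<Sum>x\<in>Pow S. (-1::real)^card(x\<inter>T)) = (\<Sum>x\<in>Pow S. (-1::real)^card(x\<inter>(T-{t})))"
      by (rule sum.cong) (simp_all add: e1)
    have s2: "(\<Sum>x\<in>Pow S. (-1::real)^card(insert t x\<inter>T)) = (\<Sum>x\<in>Pow S. - ((-1::real)^card(x\<inter>(T-{t}))))"
      by (rule sum.cong) (simp_all add: e2)
    have "(\<Sum>x\<in>Pow (insert t S). (-1::real)^card(x\<inter>T)) = 0"
      unfolding split s1 s2 by (simp add: sum_negf)
    then show ?thesis using True by auto
  next
    case False
    have TS: "T \<subseteq> S" using insert(2,4) False by blast
    have e: "\<And>x. insert t x \<inter> T = x \<inter> T" using False by blast
    show ?thesis unfolding split e using insert.IH[OF TS] insert(1,2) by simp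
  qed
qed

lemma sign_sum:
  assumes "b \<in> paulis n"
  shows "(\<Sum>a\<in>paulis n. pauli_sign a b) = (if b = ({},{}) then 4^n else 0)"
proof -
  obtain bx bz where b: "b = (bx, bz)" "bx \<subseteq> {..<n}" "bz \<subseteq> {..<n}"
    using assms unfolding paulis_def by auto
  have "(\<Sum>a\<in>paulis n. pauli_sign a b)
      = (\<Sum>a\<in>Pow {..<n} \<times> Pow {..<n}. (-1::real)^card(fst a \<inter> bz) * (-1)^card(snd a \<inter> bx))"
    unfolding paulis_def pauli_sign_def b by (simp add: power_add)
  also have "\<dots> = (\<Sum>x\<in>Pow {..<n}. (-1::real)^card(x \<inter> bz)) * (\<Sum>z\<in>Pow {..<n}. (-1::real)^card(z \<inter> bx))"
  proof -
    have "(\<Sum>x\<in>Pow {..<n}. (-1::real)^card(x \<inter> bz)) * (\<Sum>z\<in>Pow {..<n}. (-1::real)^card(z \<inter> bx))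
        = (\<Sum>x\<in>Pow {..<n}. \<Sum>z\<in>Pow {..<n}. (-1::real)^card(x \<inter> bz) * (-1)^card(z \<inter> bx))"
      by (rule sum_product)
    also have "\<dots> = (\<Sum>(x,z)\<in>Pow {..<n} \<times> Pow {..<n}. (-1::real)^card(x \<inter> bz) * (-1)^card(z \<inter> bx))"
      by (rule sum.cartesian_product)
    also have "\<dots> = (\<Sum>a\<in>Pow {..<n} \<times> Pow {..<n}. (-1::real)^card(fst a \<inter> bz) * (-1)^card(snd a \<inter> bx))"
      by (rule sum.cong) auto
    finally show ?thesis by (rule sym)
  qed
  also have "\<dots> = (if b = ({},{}) then 4^n else 0)"
  proof -
    have c1: "(\<Sum>x\<in>Pow {..<n}. (-1::real)^card(x \<inter> bz)) = (if bz = {} then 2^n else 0)"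
      using char_sum[of "{..<n}" bz] b by simp
    have c2: "(\<Sum>x\<in>Pow {..<n}. (-1::real)^card(x \<inter> bx)) = (if bx = {} then 2^n else 0)"
      using char_sum[of "{..<n}" bx] b by simp
    have e4: "(2::real)^n * 2^n = 4^n" by (simp add: power_mult_distrib[symmetric])
    show ?thesis unfolding c1 c2 b(1) using e4 by auto
  qed
  finally show ?thesis .
qed

theorem theorem1:
  fixes n :: nat and p :: "nat set \<times> nat set \<Rightarrow> real"
    and d Fp gam lam0 :: real and f :: "nat set \<times> nat set \<Rightarrow> real"
  assumes "n \<ge> 1"
    and "cptp_pauli_channel n p"
    and "d = 2 ^ n"
    and "f = pauli_fidelity n p"
    and "Fp = (\<Sum>a\<in>paulis n. f a) / d\<^sup>2"
    and "1/2 < Fp" and "Fp < 1"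
    and "gam = (\<Prod>a\<in>paulis n. f a) powr (- 2 / d\<^sup>2)"
    and "lam0 = (ln (2 - 2 * Fp) - ln (- ln (2 * Fp - 1))) / ln (2 * Fp - 1)"
  shows "Fp - 1 + 2 * lam0 * (1 - Fp) + (2 * Fp - 1) powr lam0 \<le> gam powr (- 1 / 2)
         \<and> gam powr (- 1 / 2) \<le> Fp"
proof -
  define P where "P = paulis n"
  define N :: real where "N = d\<^sup>2"
  define c where "c = 2 * Fp - 1"
  define q where "q = 1 - Fp"
  have finP: "finite P" unfolding P_def paulis_def by simp
  have N4: "N = 4^n" unfolding N_def assms(3) by (simp add: power2_eq_square power_mult_distrib[symmetric])
  have cardP: "real (card P) = N" unfolding P_def paulis_def N4
    by (simp add: card_cartesian_product card_Pow power_mult_distrib[symmetric])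
  have Npos: "N > 0" unfolding N_def assms(3) by simp
  have zP: "({},{}) \<in> P" unfolding P_def paulis_def by simp
  have pnn: "\<And>b. b \<in> P \<Longrightarrow> 0 \<le> p b" and psum: "(\<Sum>b\<in>P. p b) = 1"
    using assms(2) unfolding cptp_pauli_channel_def P_def by auto
  have fdef: "\<And>a. f a = (\<Sum>b\<in>P. p b * pauli_sign a b)"
    unfolding assms(4) pauli_fidelity_def P_def ..
  have "(\<Sum>a\<in>P. f a) = (\<Sum>b\<in>P. p b * (\<Sum>a\<in>P. pauli_sign a b))"
  proof -
    have "(\<Sum>a\<in>P. f a) = (\<Sum>a\<in>P. \<Sum>b\<in>P. p b * pauli_sign a b)" unfolding fdef ..
    also have "\<dots> = (\<Sum>b\<in>P. \<Sum>a\<in>P. p b * pauli_sign a b)" by (rule sum.swap)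
    also have "\<dots> = (\<Sum>b\<in>P. p b * (\<Sum>a\<in>P. pauli_sign a b))" by (simp only: sum_distrib_left)
    finally show ?thesis .
  qed
  also have "\<dots> = (\<Sum>b\<in>P. if b = ({},{}) then p b * N else 0)"
    by (rule sum.cong) (auto simp: sign_sum P_def N4)
  also have "\<dots> = p ({},{}) * N" using finP zP by simp
  finally have sumf: "(\<Sum>a\<in>P. f a) = p ({},{}) * N" .
  have Fp0: "Fp = p ({},{})" using assms(5) sumf Npos unfolding P_def N_def by simp
  have sgn: "\<And>a b. pauli_sign a b = 1 \<or> pauli_sign a b = -1"
    unfolding pauli_sign_def by (metis neg_one_even_power neg_one_odd_power)
  have fle: "\<And>a. f a \<le> 1"
  proof -
    fix a
    have "f a \<le> (\<Sum>b\<in>P. p b)" unfolding fdef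
      by (rule sum_mono) (use sgn pnn in \<open>smt (verit) mult_cancel_left1 mult_minus_right\<close>)
    then show "f a \<le> 1" using psum by simp
  qed
  have fge: "\<And>a. f a \<ge> c"
  proof -
    fix a
    have s0: "pauli_sign a ({},{}) = 1" unfolding pauli_sign_def by simp
    have "f a = p ({},{}) + (\<Sum>b\<in>P - {({},{})}. p b * pauli_sign a b)"
      unfolding fdef using finP zP s0 by (simp add: sum.remove)
    moreover have "(\<Sum>b\<in>P - {({},{})}. p b * pauli_sign a b) \<ge> (\<Sum>b\<in>P - {({},{})}. - p b)"
      by (rule sum_mono) (use sgn pnn in \<open>smt (verit) DiffD1 mult_cancel_left1 mult_minus_right\<close>)
    moreover have "(\<Sum>b\<in>P - {({},{})}. p b) = 1 - p ({},{})"
      using psum finP zP by (simp add: sum.remove)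
    ultimately show "f a \<ge> c" unfolding c_def Fp0 by (simp add: sum_negf)
  qed
  have cpos: "0 < c" and c1: "c < 1" using assms(6,7) unfolding c_def by auto
  have fpos: "\<And>a. f a > 0" using fge cpos less_le_trans by blast
  have Fpos: "Fp > 0" using assms(6) by simp
  define G where "G = gam powr (-1/2)"
  have Ppos: "(\<Prod>a\<in>P. f a) > 0" using fpos by (simp add: prod_pos)
  have lnG: "ln G = (\<Sum>a\<in>P. ln (f a)) / N"
  proof -
    have "G = (\<Prod>a\<in>P. f a) powr (1 / N)"
      unfolding G_def assms(8) P_def[symmetric] N_def[symmetric] powr_powr by simp
    moreover have "ln (\<Prod>a\<in>P. f a) = (\<Sum>a\<in>P. ln (f a))" proof (rule ln_prod[OF finP])
      fix i show "f i \<noteq> 0" using fpos[of i] by simp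
    qed
    ultimately show ?thesis using Ppos by (simp add: ln_powr)
  qed
  have Gpos: "G > 0" unfolding G_def using Ppos assms(8) P_def by simp
  have meanF: "(\<Sum>a\<in>P. f a) = N * Fp" using sumf Fp0 by simp
  have up: "G \<le> Fp"
  proof -
    have "(\<Sum>a\<in>P. ln (f a)) \<le> (\<Sum>a\<in>P. ln Fp + (f a / Fp - 1))"
    proof (rule sum_mono)
      fix a
      have "ln (f a / Fp) \<le> f a / Fp - 1" using fpos Fpos by (intro ln_le_minus_one) simp
      then show "ln (f a) \<le> ln Fp + (f a / Fp - 1)" using fpos[of a] Fpos by (simp add: ln_div)
    qed
    also have "\<dots> = N * ln Fp + (\<Sum>a\<in>P. f a / Fp) - N"
      using cardP by (simp add: sum.distrib sum_subtractf)
    also have "(\<Sum>a\<in>P. f a / Fp) = (\<Sum>a\<in>P. f a) / Fp" by (rule sum_divide_distrib[symmetric])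
    also have "N * ln Fp + (\<Sum>a\<in>P. f a) / Fp - N = N * ln Fp + (N * Fp) / Fp - N" by (simp only: meanF)
    also have "\<dots> = N * ln Fp" using Fpos by simp
    finally have "ln G \<le> ln Fp" unfolding lnG using Npos by (simp add: divide_le_eq mult.commute)
    then show ?thesis using Gpos Fpos by simp
  qed
  have chord: "\<And>x. c \<le> x \<Longrightarrow> x \<le> 1 \<Longrightarrow> (1 - x) / (1 - c) * ln c \<le> ln x"
  proof -
    fix x assume x: "c \<le> x" "x \<le> 1"
    define t where "t = (1 - x) / (1 - c)"
    have t0: "0 \<le> t" and t1: "t \<le> 1" unfolding t_def using x c1 by auto
    have tc: "t * (1 - c) = 1 - x" unfolding t_def using c1 by simp
    have "exp ((1 - t) *\<^sub>R 0 + t *\<^sub>R ln c) \<le> (1 - t) * exp 0 + t * exp (ln c)"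
      using convex_onD[OF exp_convex] t0 t1 by blast
    also have "\<dots> = 1 - t * (1 - c)" using cpos by (simp add: algebra_simps)
    also have "\<dots> = x" using tc by simp
    finally have "exp (t * ln c) \<le> x" by simp
    then show "(1 - x) / (1 - c) * ln c \<le> ln x"
      unfolding t_def[symmetric] using cpos x by (metis exp_le_cancel_iff exp_ln less_le_trans)
  qed
  have low1: "c powr (1/2) \<le> G"
  proof -
    have m1: "(\<Sum>a\<in>P. (1 - f a) / (1 - c) * ln c) \<le> (\<Sum>a\<in>P. ln (f a))"
      by (rule sum_mono) (use chord fge fle in auto)
    have m2: "(\<Sum>a\<in>P. (1 - f a) / (1 - c) * ln c) = (\<Sum>a\<in>P. (1 - f a)) * (ln c / (1 - c))"
      by (simp add: sum_distrib_right sum_divide_distrib)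
    have m3: "(\<Sum>a\<in>P. (1 - f a)) = N - N * Fp"
      using cardP meanF by (simp add: sum_subtractf)
    have m4: "(N - N * Fp) * (ln c / (1 - c)) = N / 2 * ln c"
    proof -
      have h: "N - N * Fp = N / 2 * (1 - c)" unfolding c_def by (simp add: algebra_simps)
      have "(N - N * Fp) * (ln c / (1 - c)) = N / 2 * ((1 - c) * (ln c / (1 - c)))" by (simp only: h mult.assoc)
      also have "(1 - c) * (ln c / (1 - c)) = ln c" using c1 by simp
      finally show ?thesis .
    qed
    have "N / 2 * ln c \<le> (\<Sum>a\<in>P. ln (f a))" using m1 unfolding m2 m3 m4 .
    then have "ln c / 2 \<le> ln G" unfolding lnG using Npos by (simp add: le_divide_eq mult.commute)
    then have "exp (ln c / 2) \<le> G" using Gpos by (metis exp_le_cancel_iff exp_ln)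
    then show ?thesis using cpos by (simp add: powr_def)
  qed
  (* lam0 minimizer *)
  have qpos: "q > 0" unfolding q_def using assms(7) by simp
  have lnc: "ln c < 0" using cpos c1 by simp
  have clam: "c powr lam0 = 2 * q / (- ln c)"
  proof -
    have "lam0 * ln c = ln (2 * q) - ln (- ln c)"
      unfolding assms(9) c_def[symmetric] using lnc by (simp add: q_def c_def)
    then show ?thesis using cpos qpos lnc by (simp add: powr_def exp_diff)
  qed
  have "c powr (1/2) = c powr lam0 * exp ((1/2 - lam0) * ln c)"
    using cpos by (simp add: powr_def exp_add[symmetric] algebra_simps)
  also have "\<dots> \<ge> c powr lam0 * (1 + (1/2 - lam0) * ln c)"
    using cpos by (intro mult_left_mono) auto
  finally have "c powr lam0 * (1 + (1/2 - lam0) * ln c) \<le> c powr (1/2)" .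
  moreover have "c powr lam0 * (1 + (1/2 - lam0) * ln c) = Fp - 1 + 2 * lam0 * (1 - Fp) + c powr lam0"
  proof -
    have e: "2 * q / (- ln c) * ln c = - 2 * q" using lnc by simp
    have "2 * q / (- ln c) * (1 + (1/2 - lam0) * ln c) = 2 * q / (- ln c) + (1/2 - lam0) * (2 * q / (- ln c) * ln c)"
      by (simp only: algebra_simps)
    also have "\<dots> = 2 * q / (- ln c) + (1/2 - lam0) * (- 2 * q)" by (simp only: e)
    also have "\<dots> = Fp - 1 + 2 * lam0 * (1 - Fp) + 2 * q / (- ln c)" unfolding q_def by (simp add: algebra_simps)
    finally show ?thesis unfolding clam .
  qed
  ultimately have "Fp - 1 + 2 * lam0 * (1 - Fp) + (2 * Fp - 1) powr lam0 \<le> G"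
    using low1 unfolding c_def by simp
  then show ?thesis using up unfolding G_def by simp
qed

end
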